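(* Let $p\ge n$, $\alpha>0$, $q<\frac{\alpha}{n+\alpha}$ and let $f$ be a positive function on $S^{n-1}$. If $h_1,h_2$ are positive $C^2$ solutions on $S^{n-1}$ of $h^{1-p}g_{\alpha,q}(Dh)\det(h_{ij}+h\delta_{ij})=f$, then $h_1=h_2$.
   Context: $g_{\alpha,q}(x)=\frac{1}{Z(\alpha,q)}[1-\frac{q}{\alpha}|x|^\alpha]_+^{\frac1q-\frac n\alpha-1}$ ($q\ne0$), $\frac{1}{Z(\alpha,q)}e^{-|x|^\alpha/\alpha}$ ($q=0$), $Z(\alpha,q)$ normalizing $\int g_{\alpha,q}=1$. $h_{ij}$: covariant Hessian on $S^{n-1}$ in an orthonormal frame; $Dh$: Euclidean gradient of the 1-homogeneous extension of $h$, $|Dh|^2=h^2+|\nabla h|^2$. *)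

theory Defs
  imports "HOL-Analysis.Analysis"
begin

definition hom_ext :: "(real^'n \<Rightarrow> real) \<Rightarrow> real^'n \<Rightarrow> real" where
  "hom_ext h x = norm x * h (x /\<^sub>R norm x)"

definition C2_on :: "(real^'n) set \<Rightarrow> (real^'n \<Rightarrow> real) \<Rightarrow> bool" where
  "C2_on S F \<longleftrightarrow> (\<exists>G :: real^'n \<Rightarrow> real^'n. \<exists>Hs :: real^'n \<Rightarrow> real^'n^'n.
     (\<forall>x\<in>S. (F has_derivative (\<lambda>v. G x \<bullet> v)) (at x)) \<and>
     (\<forall>x\<in>S. (G has_derivative (\<lambda>v. Hs x *v v)) (at x)) \<and>
     continuous_on S Hs)"

definition grad :: "(real^'n \<Rightarrow> real) \<Rightarrow> real^'n \<Rightarrow> real^'n" where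
  "grad F x = (THE g. (F has_derivative (\<lambda>v. g \<bullet> v)) (at x))"

definition sph_exp :: "real^'n \<Rightarrow> real^'n \<Rightarrow> real^'n" where
  "sph_exp x v = (if v = 0 then x else cos (norm v) *\<^sub>R x + (sin (norm v) / norm v) *\<^sub>R v)"

text \<open>Covariant Hessian of h on the sphere at x: the quadratic form is the second derivative
  along geodesics, the bilinear form is obtained by polarization.\<close>
definition cov_quad :: "(real^'n \<Rightarrow> real) \<Rightarrow> real^'n \<Rightarrow> real^'n \<Rightarrow> real" where
  "cov_quad h x v = deriv (\<lambda>s. deriv (\<lambda>t. h (sph_exp x (t *\<^sub>R v))) s) 0"

definition cov_hess :: "(real^'n \<Rightarrow> real) \<Rightarrow> real^'n \<Rightarrow> real^'n \<Rightarrow> real^'n \<Rightarrow> real" where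
  "cov_hess h x u w = (cov_quad h x (u + w) - cov_quad h x (u - w)) / 4"

definition ortho_frame :: "real^'n \<Rightarrow> (nat \<Rightarrow> real^'n) \<Rightarrow> bool" where
  "ortho_frame x e \<longleftrightarrow> (\<forall>i<CARD('n) - 1. e i \<bullet> x = 0) \<and>
     (\<forall>i<CARD('n) - 1. \<forall>j<CARD('n) - 1. e i \<bullet> e j = (if i = j then 1 else 0))"

definition det_nat :: "nat \<Rightarrow> (nat \<Rightarrow> nat \<Rightarrow> real) \<Rightarrow> real" where
  "det_nat m A = (\<Sum>\<sigma> | \<sigma> permutes {..<m}. of_int (sign \<sigma>) * (\<Prod>i<m. A i (\<sigma> i)))"

definition frame_det :: "(real^'n \<Rightarrow> real) \<Rightarrow> real^'n \<Rightarrow> (nat \<Rightarrow> real^'n) \<Rightarrow> real" where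
  "frame_det h x e = det_nat (CARD('n) - 1)
     (\<lambda>i j. cov_hess h x (e i) (e j) + h x * (if i = j then 1 else 0))"

definition g_unnorm :: "real \<Rightarrow> real \<Rightarrow> real^'n \<Rightarrow> real" where
  "g_unnorm \<alpha> q y = (if q = 0 then exp (- (norm y powr \<alpha>) / \<alpha>)
     else max 0 (1 - q / \<alpha> * norm y powr \<alpha>) powr (1 / q - real CARD('n) / \<alpha> - 1))"

definition g_aq :: "real \<Rightarrow> real \<Rightarrow> real^'n \<Rightarrow> real" where
  "g_aq \<alpha> q y = g_unnorm \<alpha> q y / (\<integral>z. g_unnorm \<alpha> q (z :: real^'n) \<partial>lborel)"

definition pos_C2_solution :: "real \<Rightarrow> real \<Rightarrow> real \<Rightarrow> (real^'n \<Rightarrow> real) \<Rightarrow> (real^'n \<Rightarrow> real) \<Rightarrow> bool" where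
  "pos_C2_solution p \<alpha> q f h \<longleftrightarrow>
     (\<forall>x\<in>sphere 0 1. h x > 0) \<and> C2_on (- {0}) (hom_ext h) \<and>
     (\<forall>x\<in>sphere 0 1. \<forall>e. ortho_frame x e \<longrightarrow>
        h x powr (1 - p) * g_aq \<alpha> q (grad (hom_ext h) x) * frame_det h x e = f x)"

end

theory Submission
  imports Defs "Jordan_Normal_Form.Determinant"
begin


lemma det_nat_jnf: "det_nat m A = Determinant.det (mat m m (\<lambda>(i,j). A i j))"
  unfolding det_nat_def Determinant.det_def
  by (simp add: atLeast0LessThan)

lemma prod_list_ones: "prod_list (map (\<lambda>_. (1::real)) xs) = 1"
  by (induct xs) auto

lemma det_schur:
  fixes A :: "nat \<Rightarrow> nat \<Rightarrow> real"
  assumes a0: "A 0 0 \<noteq> 0"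
  shows "det_nat (Suc m) A = A 0 0 * det_nat m (\<lambda>i j. A (Suc i) (Suc j) - A (Suc i) 0 * A 0 (Suc j) / A 0 0)"
proof -
  define M where "M = mat (Suc m) (Suc m) (\<lambda>(i,j). A i j)"
  define E :: "real mat" where "E = mat (Suc m) (Suc m) (\<lambda>(i,j). if i = j then 1 else if j = 0 then - A i 0 / A 0 0 else 0)"
  define M' where "M' = mat (Suc m) (Suc m) (\<lambda>(i,j). if i = 0 then A 0 j else A i j - A i 0 * A 0 j / A 0 0)"
  have EM: "E * M = M'"
  proof (rule eq_matI)
    fix i j assume i: "i < dim_row M'" and j: "j < dim_col M'"
    hence i': "i < Suc m" and j': "j < Suc m" by (auto simp: M'_def)
    have "(E * M) $$ (i,j) = (\<Sum>k\<in>{0..<Suc m}. E $$ (i,k) * M $$ (k,j))"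
      using i' j' by (simp add: E_def M_def scalar_prod_def)
    also have "\<dots> = (\<Sum>k\<in>{0..<Suc m}. (if k = i then A i j else 0) + (if k = 0 \<and> i \<noteq> 0 then - A i 0 / A 0 0 * A 0 j else 0))"
      apply (rule sum.cong, simp)
      using i' j' by (auto simp: E_def M_def)
    also have "\<dots> = M' $$ (i,j)"
      using i' j' by (simp add: sum.distrib M'_def)
    finally show "(E * M) $$ (i,j) = M' $$ (i,j)" .
  qed (auto simp: E_def M_def M'_def)
  have dE: "Determinant.det E = 1"
  proof -
    have "Determinant.det E = prod_list (diag_mat E)"
      by (rule det_lower_triangular[of "Suc m"]) (auto simp: E_def)
    also have "diag_mat E = map (\<lambda>_. 1) [0..<Suc m]"
      by (auto simp: diag_mat_def E_def)
    finally show ?thesis by (simp only: prod_list_ones)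
  qed
  have "det_nat (Suc m) A = Determinant.det M" by (simp add: det_nat_jnf M_def)
  also have "\<dots> = Determinant.det M'"
    using det_mult[of E "Suc m" M] dE EM by (simp add: E_def M_def)
  also have "\<dots> = (\<Sum>i<Suc m. M' $$ (i,0) * cofactor M' i 0)"
    by (rule laplace_expansion_column) (auto simp: M'_def)
  also have "\<dots> = M' $$ (0,0) * cofactor M' 0 0"
    apply (subst sum.lessThan_Suc_shift)
    using a0 by (simp add: M'_def)
  also have "cofactor M' 0 0 = det_nat m (\<lambda>i j. A (Suc i) (Suc j) - A (Suc i) 0 * A 0 (Suc j) / A 0 0)"
    unfolding cofactor_def det_nat_jnf
    by (auto intro!: arg_cong[where f=Determinant.det] simp: mat_delete_def M'_def insert_index_def)
  finally show ?thesis by (simp add: M'_def)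
qed



definition qf :: "nat \<Rightarrow> (nat \<Rightarrow> nat \<Rightarrow> real) \<Rightarrow> (nat \<Rightarrow> real) \<Rightarrow> real" where
  "qf m A c = (\<Sum>i<m. \<Sum>j<m. c i * A i j * c j)"

lemma qf_indicator:
  assumes k: "k < m"
  shows "qf m A (\<lambda>i. if i = k then 1 else 0) = A k k"
proof -
  have inner: "(\<Sum>j<m. (if i = k then 1 else 0) * A i j * (if j = k then 1 else 0)) = (if i = k then A i k else 0)" for i
  proof -
    have "(\<Sum>j<m. (if i = k then 1 else 0) * A i j * (if j = k then 1 else 0)) = (\<Sum>j<m. if j = k then (if i = k then A i k else 0) else 0)"
      by (rule sum.cong) auto
    also have "\<dots> = (if i = k then A i k else 0)" using k by (simp add: sum.delta')
    finally show ?thesis .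
  qed
  show ?thesis unfolding qf_def inner using k by (simp add: sum.delta')
qed

lemma qf_schur:
  fixes A :: "nat \<Rightarrow> nat \<Rightarrow> real"
  assumes sym: "\<forall>i<Suc m. \<forall>j<Suc m. A i j = A j i" and a0: "A 0 0 \<noteq> 0"
  shows "qf (Suc m) A c = A 0 0 * (c 0 + (\<Sum>j<m. A 0 (Suc j) * c (Suc j)) / A 0 0)^2
     + qf m (\<lambda>i j. A (Suc i) (Suc j) - A (Suc i) 0 * A 0 (Suc j) / A 0 0) (\<lambda>i. c (Suc i))"
proof -
  define \<beta> where "\<beta> = (\<Sum>j<m. A 0 (Suc j) * c (Suc j))"
  have s1: "(\<Sum>i<m. c (Suc i) * A (Suc i) 0 * c 0) = c 0 * \<beta>"
    unfolding \<beta>_def sum_distrib_left using sym by (auto intro!: sum.cong)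
  have s2: "(\<Sum>j<m. c 0 * A 0 (Suc j) * c (Suc j)) = c 0 * \<beta>"
    unfolding \<beta>_def sum_distrib_left by (auto intro!: sum.cong)
  have s3: "qf m (\<lambda>i j. A (Suc i) 0 * A 0 (Suc j) / A 0 0) (\<lambda>i. c (Suc i)) = \<beta>^2 / A 0 0"
  proof -
    have "qf m (\<lambda>i j. A (Suc i) 0 * A 0 (Suc j) / A 0 0) (\<lambda>i. c (Suc i))
       = (\<Sum>i<m. \<Sum>j<m. (A 0 (Suc i) * c (Suc i)) * (A 0 (Suc j) * c (Suc j)) / A 0 0)"
      unfolding qf_def using sym by (auto intro!: sum.cong)
    also have "\<dots> = \<beta> * \<beta> / A 0 0"
      unfolding \<beta>_def sum_product sum_divide_distrib by simp
    finally show ?thesis by (simp add: power2_eq_square)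
  qed
  have "qf (Suc m) A c = c 0 * A 0 0 * c 0 + (\<Sum>j<m. c 0 * A 0 (Suc j) * c (Suc j))
     + (\<Sum>i<m. c (Suc i) * A (Suc i) 0 * c 0) + qf m (\<lambda>i j. A (Suc i) (Suc j)) (\<lambda>i. c (Suc i))"
    unfolding qf_def sum.lessThan_Suc_shift sum.distrib by simp
  also have "qf m (\<lambda>i j. A (Suc i) (Suc j)) (\<lambda>i. c (Suc i)) =
     qf m (\<lambda>i j. A (Suc i) (Suc j) - A (Suc i) 0 * A 0 (Suc j) / A 0 0) (\<lambda>i. c (Suc i))
     + qf m (\<lambda>i j. A (Suc i) 0 * A 0 (Suc j) / A 0 0) (\<lambda>i. c (Suc i))"
    unfolding qf_def by (simp add: sum.distrib[symmetric] algebra_simps)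
  also have "A 0 0 * (c 0 + \<beta> / A 0 0)^2 = c 0 * A 0 0 * c 0 + 2 * (c 0 * \<beta>) + \<beta>^2 / A 0 0"
    using a0 by (simp add: power2_eq_square field_simps)
  ultimately show ?thesis unfolding s1 s2 s3 \<beta>_def[symmetric] by linarith
qed

lemma det_mono:
  fixes A B :: "nat \<Rightarrow> nat \<Rightarrow> real"
  assumes "\<forall>i<m. \<forall>j<m. A i j = A j i" "\<forall>i<m. \<forall>j<m. B i j = B j i"
    "\<forall>c. (\<exists>i<m. c i \<noteq> 0) \<longrightarrow> 0 < qf m A c" "\<forall>c. qf m A c \<le> qf m B c"
  shows "0 < det_nat m A \<and> det_nat m A \<le> det_nat m B"
  using assms
proof (induction m arbitrary: A B)
  case 0
  then show ?case by (simp add: det_nat_def)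
next
  case (Suc m)
  define a where "a = A 0 0"
  define b where "b = B 0 0"
  have a: "a > 0" using Suc.prems(3)[rule_format, of "\<lambda>i. if i = 0 then 1 else 0"]
    by (auto simp: qf_indicator a_def)
  have ab: "a \<le> b" using Suc.prems(4)[rule_format, of "\<lambda>i. if i = 0 then 1 else 0"]
    by (auto simp: qf_indicator a_def b_def)
  have b: "b > 0" using a ab by simp
  define SA where "SA = (\<lambda>i j. A (Suc i) (Suc j) - A (Suc i) 0 * A 0 (Suc j) / A 0 0)"
  define SB where "SB = (\<lambda>i j. B (Suc i) (Suc j) - B (Suc i) 0 * B 0 (Suc j) / B 0 0)"
  have qA: "qf (Suc m) A c = a * (c 0 + (\<Sum>j<m. A 0 (Suc j) * c (Suc j)) / a)^2 + qf m SA (\<lambda>i. c (Suc i))" for c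
    unfolding a_def SA_def by (rule qf_schur) (use Suc.prems(1) a in \<open>auto simp: a_def\<close>)
  have qB: "qf (Suc m) B c = b * (c 0 + (\<Sum>j<m. B 0 (Suc j) * c (Suc j)) / b)^2 + qf m SB (\<lambda>i. c (Suc i))" for c
    unfolding b_def SB_def by (rule qf_schur) (use Suc.prems(2) b in \<open>auto simp: b_def\<close>)
  have symA: "\<forall>i<m. \<forall>j<m. SA i j = SA j i" using Suc.prems(1) by (auto simp: SA_def)
  have symB: "\<forall>i<m. \<forall>j<m. SB i j = SB j i" using Suc.prems(2) by (auto simp: SB_def)
  have pdA: "\<forall>y. (\<exists>i<m. y i \<noteq> 0) \<longrightarrow> 0 < qf m SA y"
  proof (intro allI impI)
    fix y :: "nat \<Rightarrow> real" assume "\<exists>i<m. y i \<noteq> 0"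
    define c where "c = (\<lambda>i. if i = 0 then - (\<Sum>j<m. A 0 (Suc j) * y j) / a else y (i - 1))"
    have cy: "(\<lambda>i. c (Suc i)) = y" by (auto simp: c_def)
    have "\<exists>i<Suc m. c i \<noteq> 0" using \<open>\<exists>i<m. y i \<noteq> 0\<close> by (auto simp: c_def)
    hence "0 < qf (Suc m) A c" using Suc.prems(3) by auto
    also have "qf (Suc m) A c = qf m SA y" unfolding qA cy using a by (simp add: c_def)
    finally show "0 < qf m SA y" .
  qed
  have leAB: "\<forall>y. qf m SA y \<le> qf m SB y"
  proof
    fix y :: "nat \<Rightarrow> real"
    define c where "c = (\<lambda>i. if i = 0 then - (\<Sum>j<m. B 0 (Suc j) * y j) / b else y (i - 1))"
    have cy: "(\<lambda>i. c (Suc i)) = y" by (auto simp: c_def)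
    have "qf m SA y \<le> qf (Suc m) A c" unfolding qA cy using a by simp
    also have "\<dots> \<le> qf (Suc m) B c" using Suc.prems(4) by auto
    also have "\<dots> = qf m SB y" unfolding qB cy using b by (simp add: c_def)
    finally show "qf m SA y \<le> qf m SB y" .
  qed
  from Suc.IH[OF symA symB pdA leAB] have ih: "0 < det_nat m SA" "det_nat m SA \<le> det_nat m SB" by auto
  have dA: "det_nat (Suc m) A = a * det_nat m SA" unfolding a_def SA_def
    by (rule det_schur) (use a in \<open>simp add: a_def\<close>)
  have dB: "det_nat (Suc m) B = b * det_nat m SB" unfolding b_def SB_def
    by (rule det_schur) (use b in \<open>simp add: b_def\<close>)
  show ?case unfolding dA dB using a ab ih by (auto intro: mult_mono)
qed

lemma det_nat_zero_col:
  assumes "k < m" "\<forall>i<m. A i k = 0"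
  shows "det_nat m A = 0"
  unfolding det_nat_def
proof (rule sum.neutral, intro ballI)
  fix \<sigma> assume "\<sigma> \<in> {\<sigma>. \<sigma> permutes {..<m}}"
  hence p: "\<sigma> permutes {..<m}" by simp
  define i where "i = inv_into UNIV \<sigma> k"
  have "\<sigma> i = k" unfolding i_def using p by (simp add: permutes_inverses(1))
  moreover have "i < m" unfolding i_def using permutes_in_image[OF permutes_inv[OF p], of k] assms(1) by simp
  ultimately have "(\<Prod>i<m. A i (\<sigma> i)) = 0" using assms(2) by (intro prod_zero) auto
  thus "of_int (sign \<sigma>) * (\<Prod>i<m. A i (\<sigma> i)) = 0" by simp
qed

lemma det_nat_smult: "det_nat m (\<lambda>i j. c * A i j) = c ^ m * det_nat m A"
  unfolding det_nat_def sum_distrib_left by (auto intro!: sum.cong simp: prod.distrib)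


no_notation Matrix.scalar_prod (infix "\<bullet>" 70)
no_notation Matrix.vec_index (infixl "$" 100)



lemma ortho_compl_basis:
  fixes F :: "'a::euclidean_space set"
  assumes fin: "finite F" and po: "pairwise Linear_Algebra.orthogonal F" and un: "\<forall>z\<in>F. norm z = 1"
  obtains B where "B \<subseteq> {y. \<forall>z\<in>F. z \<bullet> y = 0}" "pairwise Linear_Algebra.orthogonal B" "\<forall>b\<in>B. norm b = 1"
    "finite B" "card B + card F = DIM('a)"
proof -
  define T where "T = {y \<in> UNIV. \<forall>z \<in> span F. Linear_Algebra.orthogonal z y}"
  have "dim T + dim (span F) = dim (UNIV :: 'a set)"
    unfolding T_def by (rule dim_subspace_orthogonal_to_vectors) auto
  moreover have "independent F"
    by (rule pairwise_orthogonal_independent[OF po]) (use un in auto)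
  hence "dim (span F) = card F" by (rule dim_span_eq_card_independent)
  ultimately have dT: "dim T + card F = DIM('a)" by simp
  have "subspace T" unfolding T_def using subspace_orthogonal_to_vectors[of "span F"] by simp
  then obtain B where B: "B \<subseteq> T" "pairwise Linear_Algebra.orthogonal B" "\<And>x. x \<in> B \<Longrightarrow> norm x = 1"
     "independent B" "card B = dim T" "span B = T"
    by (metis orthonormal_basis_subspace)
  have "finite B" using B(4) independent_imp_finite by blast
  moreover have "B \<subseteq> {y. \<forall>z\<in>F. z \<bullet> y = 0}"
    using B(1) unfolding T_def Linear_Algebra.orthogonal_def by (auto intro: span_base)
  ultimately show ?thesis using that B dT by auto
qed

lemma frame_from_set:
  fixes B :: "(real^'n) set"
  assumes "finite B" "pairwise Linear_Algebra.orthogonal B" "\<forall>b\<in>B. norm b = 1" "\<forall>b\<in>B. b \<bullet> x = 0"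
  obtains \<phi> where "bij_betw \<phi> {..<card B} B"
    "\<forall>i<card B. \<forall>j<card B. \<phi> i \<bullet> \<phi> j = (if i = j then 1 else 0)" "\<forall>i<card B. \<phi> i \<bullet> x = 0"
proof -
  obtain \<phi> where bij: "bij_betw \<phi> {0..<card B} B" using ex_bij_betw_nat_finite[OF assms(1)] by blast
  hence bij': "bij_betw \<phi> {..<card B} B" by (simp add: atLeast0LessThan)
  have im: "\<phi> i \<in> B" if "i < card B" for i using bij' that by (auto simp: bij_betw_def)
  have "\<phi> i \<bullet> \<phi> j = (if i = j then 1 else 0)" if "i < card B" "j < card B" for i j
  proof (cases "i = j")
    case True thus ?thesis using im[OF that(1)] assms(3) by (simp add: dot_square_norm)
  next
    case False
    hence "\<phi> i \<noteq> \<phi> j" using bij' that by (auto simp: bij_betw_def inj_on_def)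
    thus ?thesis using False assms(2) im that unfolding pairwise_def Linear_Algebra.orthogonal_def by auto
  qed
  thus ?thesis using that bij' im assms(4) by auto
qed

lemma frame_exists:
  fixes x :: "real^'n"
  assumes "norm x = 1"
  shows "\<exists>e. ortho_frame x e"
proof -
  obtain B where B: "B \<subseteq> {y. \<forall>z\<in>{x}. z \<bullet> y = 0}" "pairwise Linear_Algebra.orthogonal B" "\<forall>b\<in>B. norm b = 1"
    "finite B" "card B + card {x} = DIM(real^'n)"
    by (rule ortho_compl_basis[of "{x}"]) (use assms in auto)
  have "\<forall>b\<in>B. b \<bullet> x = 0" using B(1) by (auto simp: inner_commute)
  then obtain \<phi> where "\<forall>i<card B. \<forall>j<card B. \<phi> i \<bullet> \<phi> j = (if i = j then 1 else 0)" "\<forall>i<card B. \<phi> i \<bullet> x = 0"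
    using frame_from_set[OF B(4) B(2) B(3)] by metis
  moreover have "card B = CARD('n) - 1" using B(5) by simp
  ultimately show ?thesis unfolding ortho_frame_def by metis
qed

lemma frame_exists_with:
  fixes x w :: "real^'n"
  assumes "norm x = 1" "norm w = 1" "w \<bullet> x = 0"
  shows "\<exists>e. ortho_frame x e \<and> e 0 = w \<and> 0 < CARD('n) - 1"
proof -
  have xw: "x \<noteq> w" using assms by (metis inner_eq_zero_iff norm_zero zero_neq_one)
  have po: "pairwise Linear_Algebra.orthogonal {x, w}" using assms(3) xw
    unfolding pairwise_def Linear_Algebra.orthogonal_def by (auto simp: inner_commute)
  obtain B where B: "B \<subseteq> {y. \<forall>z\<in>{x,w}. z \<bullet> y = 0}" "pairwise Linear_Algebra.orthogonal B" "\<forall>b\<in>B. norm b = 1"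
    "finite B" "card B + card {x,w} = DIM(real^'n)"
    by (rule ortho_compl_basis[of "{x,w}"]) (use assms po in auto)
  have "\<forall>b\<in>B. b \<bullet> x = 0" using B(1) by (auto simp: inner_commute)
  then obtain \<phi> where ph: "\<forall>i<card B. \<forall>j<card B. \<phi> i \<bullet> \<phi> j = (if i = j then 1 else 0)" "\<forall>i<card B. \<phi> i \<bullet> x = 0"
    "bij_betw \<phi> {..<card B} B"
    using frame_from_set[OF B(4) B(2) B(3)] by metis
  have cB: "card B + 2 = CARD('n)" using B(5) xw by simp
  have pw: "\<phi> i \<bullet> w = 0" if "i < card B" for i
  proof -
    have "\<phi> i \<in> B" using ph(3) that by (auto simp: bij_betw_def)
    thus ?thesis using B(1) by (auto simp: inner_commute)
  qed
  define e where "e = (\<lambda>i. if i = 0 then w else \<phi> (i - 1))"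
  have "ortho_frame x e" unfolding ortho_frame_def
  proof (intro conjI allI impI)
    fix i assume "i < CARD('n) - 1"
    thus "e i \<bullet> x = 0" using ph(2) assms(3) cB by (auto simp: e_def)
  next
    fix i j assume i: "i < CARD('n) - 1" and j: "j < CARD('n) - 1"
    show "e i \<bullet> e j = (if i = j then 1 else 0)"
    proof (cases "i = 0"; cases "j = 0")
      assume "i = 0" "j = 0" thus ?thesis using assms(2) by (simp add: e_def dot_square_norm)
    next
      assume "i = 0" "j \<noteq> 0" thus ?thesis using pw[of "j - 1"] j cB by (simp add: e_def inner_commute)
    next
      assume "i \<noteq> 0" "j = 0" thus ?thesis using pw[of "i - 1"] i cB by (simp add: e_def)
    next
      assume "i \<noteq> 0" "j \<noteq> 0" thus ?thesis using ph(1)[rule_format, of "i - 1" "j - 1"] i j cB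
        by (auto simp: e_def)
    qed
  qed
  thus ?thesis using cB by (auto simp: e_def)
qed




lemma hom_ext_sphere: "norm x = 1 \<Longrightarrow> hom_ext h x = h x"
  by (simp add: hom_ext_def)

lemma hom_ext_scale:
  fixes y :: "real^'n"
  assumes "s > 0" shows "hom_ext h (s *\<^sub>R y) = s * hom_ext h y"
proof (cases "y = 0")
  case True thus ?thesis by (simp add: hom_ext_def)
next
  case False
  have e: "(s *\<^sub>R y) /\<^sub>R norm (s *\<^sub>R y) = y /\<^sub>R norm y" using assms False by simp
  show ?thesis unfolding hom_ext_def e using assms by simp
qed

lemma euler:
  fixes h :: "real^'n \<Rightarrow> real"
  assumes dH: "\<forall>x\<in>-{0}. (hom_ext h has_derivative (\<lambda>v. G x \<bullet> v)) (at x)" and y: "y \<noteq> 0"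
  shows "G y \<bullet> y = hom_ext h y"
proof -
  let ?H = "hom_ext h"
  have "((\<lambda>s::real. s *\<^sub>R y) has_derivative (\<lambda>t. t *\<^sub>R y)) (at 1)" by (auto intro!: derivative_eq_intros)
  moreover have "(?H has_derivative (\<lambda>v. G y \<bullet> v)) (at ((\<lambda>s::real. s *\<^sub>R y) 1))" using dH y by simp
  ultimately have "((\<lambda>s. ?H (s *\<^sub>R y)) has_derivative (\<lambda>t. G y \<bullet> (t *\<^sub>R y))) (at 1)"
    by (rule has_derivative_compose)
  moreover have "(\<lambda>t. G y \<bullet> (t *\<^sub>R y)) = (*) (G y \<bullet> y)" by (auto simp: fun_eq_iff mult.commute)
  ultimately have d1: "((\<lambda>s. ?H (s *\<^sub>R y)) has_real_derivative (G y \<bullet> y)) (at 1)"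
    unfolding has_field_derivative_def by simp
  have d2: "((\<lambda>s. s * ?H y) has_real_derivative ?H y) (at 1)" by (auto intro!: derivative_eq_intros)
  have d3: "((\<lambda>s. ?H (s *\<^sub>R y)) has_real_derivative ?H y) (at 1)"
    by (rule has_field_derivative_transform_within_open[OF d2, of "{0<..}"]) (auto simp: hom_ext_scale)
  show ?thesis using DERIV_unique[OF d1 d3] .
qed

lemma vd_comb:
  fixes x w :: "real^'n"
  assumes "(f has_real_derivative f') (at t)" "(g has_real_derivative g') (at t)"
  shows "((\<lambda>t. f t *\<^sub>R x + g t *\<^sub>R w) has_derivative (\<lambda>u. u *\<^sub>R (f' *\<^sub>R x + g' *\<^sub>R w))) (at t)"
proof -
  have "((\<lambda>t. f t *\<^sub>R x + g t *\<^sub>R w) has_vector_derivative (f' *\<^sub>R x + g' *\<^sub>R w)) (at t)"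
    using has_vector_derivative_add[OF has_vector_derivative_scaleR[OF assms(1) has_vector_derivative_const]
        has_vector_derivative_scaleR[OF assms(2) has_vector_derivative_const]] by simp
  thus ?thesis by (simp add: has_vector_derivative_def)
qed

lemma geo:
  fixes h :: "real^'n \<Rightarrow> real" and x v :: "real^'n"
  assumes dH: "\<forall>x\<in>-{0}. (hom_ext h has_derivative (\<lambda>v. G x \<bullet> v)) (at x)"
    and dG: "\<forall>x\<in>-{0}. (G has_derivative (\<lambda>v. Hs x *v v)) (at x)"
    and x: "norm x = 1" and vx: "v \<bullet> x = 0"
  shows "(\<forall>t. norm (sph_exp x (t *\<^sub>R v)) = 1) \<and>
    (\<exists>d. (\<forall>s. ((\<lambda>t. h (sph_exp x (t *\<^sub>R v))) has_real_derivative d s) (at s)) \<and> d 0 = G x \<bullet> v \<and>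
       (d has_real_derivative (v \<bullet> (Hs x *v v) - (v \<bullet> v) * h x)) (at 0))"
proof (cases "v = 0")
  case True
  have "sph_exp x (t *\<^sub>R v) = x" for t using True by (simp add: sph_exp_def)
  thus ?thesis using x True by (auto intro!: exI[of _ "\<lambda>_. 0"])
next
  case False
  let ?H = "hom_ext h"
  define a where "a = norm v"
  have a: "a > 0" using False by (simp add: a_def)
  have vv: "v \<bullet> v = a * a" by (simp add: a_def dot_square_norm power2_eq_square)
  have xx: "x \<bullet> x = 1" using x by (simp add: dot_square_norm)
  define w where "w = v /\<^sub>R a"
  have vw: "v = a *\<^sub>R w" using a by (simp add: w_def)
  define \<gamma> where "\<gamma> = (\<lambda>t. cos (t * a) *\<^sub>R x + sin (t * a) *\<^sub>R w)"
  define \<gamma>' where "\<gamma>' = (\<lambda>t. (- a * sin (t * a)) *\<^sub>R x + (a * cos (t * a)) *\<^sub>R w)"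
  define \<gamma>'' where "\<gamma>'' = (\<lambda>t. (- a * a * cos (t * a)) *\<^sub>R x + (- a * a * sin (t * a)) *\<^sub>R w)"
  have eq: "sph_exp x (t *\<^sub>R v) = \<gamma> t" for t
  proof (cases "t = 0")
    case True thus ?thesis by (simp add: sph_exp_def \<gamma>_def)
  next
    case False
    have n: "norm (t *\<^sub>R v) = \<bar>t\<bar> * a" by (simp add: a_def)
    have c: "cos (\<bar>t\<bar> * a) = cos (t * a)"
      by (cases "t \<ge> 0") (auto simp: abs_if)
    have s: "sin (\<bar>t\<bar> * a) / (\<bar>t\<bar> * a) * t = sin (t * a) / a"
      using False a by (cases "t \<ge> 0") (auto simp: abs_if field_simps)
    have s2: "t * (inverse \<bar>t\<bar> * sin (a * \<bar>t\<bar>)) = sin (a * t)"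
      using False by (cases "t \<ge> 0") (auto simp: abs_if field_simps)
    show ?thesis using False \<open>v \<noteq> 0\<close> unfolding sph_exp_def \<gamma>_def n c w_def
      using s2 by (simp add: divide_inverse mult.commute)
  qed
  have ng: "norm (\<gamma> t) = 1" for t
  proof -
    have "\<gamma> t \<bullet> \<gamma> t = (cos (t * a))^2 * (x \<bullet> x) + (sin (t * a) / a)^2 * (v \<bullet> v) + 2 * (cos (t * a) * (sin (t * a) / a)) * (v \<bullet> x)"
      unfolding \<gamma>_def w_def by (simp add: inner_add_left inner_add_right inner_commute power2_eq_square algebra_simps divide_inverse)
    also have "\<dots> = (cos (t * a))^2 + (sin (t * a))^2"
      using a by (simp add: xx vv vx power2_eq_square field_simps)
    also have "\<dots> = 1" by simp
    finally show ?thesis by (simp add: norm_eq_1)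
  qed
  have g0: "\<gamma> t \<noteq> 0" for t using ng[of t] by auto
  have hg: "h (sph_exp x (t *\<^sub>R v)) = ?H (\<gamma> t)" for t
    using ng[of t] by (simp add: eq hom_ext_sphere)
  have Dg: "(\<gamma> has_derivative (\<lambda>u. u *\<^sub>R \<gamma>' t)) (at t)" for t
    unfolding \<gamma>_def \<gamma>'_def
    by (rule vd_comb) (auto intro!: derivative_eq_intros)
  have Dg': "(\<gamma>' has_derivative (\<lambda>u. u *\<^sub>R \<gamma>'' t)) (at t)" for t
    unfolding \<gamma>'_def \<gamma>''_def
    by (rule vd_comb) (auto intro!: derivative_eq_intros)
  define d where "d = (\<lambda>s. G (\<gamma> s) \<bullet> \<gamma>' s)"
  have D1: "((\<lambda>t. h (sph_exp x (t *\<^sub>R v))) has_real_derivative d s) (at s)" for s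
  proof -
    have "(?H has_derivative (\<lambda>w. G (\<gamma> s) \<bullet> w)) (at (\<gamma> s))" using dH g0[of s] by simp
    from has_derivative_compose[OF Dg this]
    have "((\<lambda>t. ?H (\<gamma> t)) has_derivative (\<lambda>u. G (\<gamma> s) \<bullet> (u *\<^sub>R \<gamma>' s))) (at s)" .
    moreover have "(\<lambda>u. G (\<gamma> s) \<bullet> (u *\<^sub>R \<gamma>' s)) = (*) (d s)" by (auto simp: fun_eq_iff d_def mult.commute)
    ultimately show ?thesis unfolding has_field_derivative_def hg by simp
  qed
  have g00: "\<gamma> 0 = x" "\<gamma>' 0 = v" "\<gamma>'' 0 = (- (a * a)) *\<^sub>R x" by (simp_all add: \<gamma>_def \<gamma>'_def \<gamma>''_def vw)
  have D2: "(d has_real_derivative (v \<bullet> (Hs x *v v) - (v \<bullet> v) * h x)) (at 0)"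
  proof -
    have "(G has_derivative (\<lambda>w. Hs (\<gamma> 0) *v w)) (at (\<gamma> 0))" using dG g0[of 0] by simp
    from has_derivative_compose[OF Dg this]
    have "((\<lambda>t. G (\<gamma> t)) has_derivative (\<lambda>u. Hs (\<gamma> 0) *v (u *\<^sub>R \<gamma>' 0))) (at 0)" .
    from has_derivative_inner[OF this Dg']
    have "(d has_derivative (\<lambda>u. G (\<gamma> 0) \<bullet> (u *\<^sub>R \<gamma>'' 0) + (Hs (\<gamma> 0) *v (u *\<^sub>R \<gamma>' 0)) \<bullet> \<gamma>' 0)) (at 0)"
      unfolding d_def .
    moreover have "x \<noteq> 0" using x by auto
    hence "G x \<bullet> x = h x" using euler[OF dH, of x] x by (auto simp: hom_ext_sphere)
    hence "(\<lambda>u. G (\<gamma> 0) \<bullet> (u *\<^sub>R \<gamma>'' 0) + (Hs (\<gamma> 0) *v (u *\<^sub>R \<gamma>' 0)) \<bullet> \<gamma>' 0) = (*) (v \<bullet> (Hs x *v v) - (v \<bullet> v) * h x)"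
      unfolding g00 vv by (auto simp: fun_eq_iff matrix_vector_mult_scaleR inner_commute algebra_simps)
    ultimately show ?thesis unfolding has_field_derivative_def by simp
  qed
  have "d 0 = G x \<bullet> v" by (simp add: d_def g00)
  thus ?thesis using D1 D2 ng eq by auto
qed

lemma cov_quad_eq:
  fixes h :: "real^'n \<Rightarrow> real" and x v :: "real^'n"
  assumes dH: "\<forall>x\<in>-{0}. (hom_ext h has_derivative (\<lambda>v. G x \<bullet> v)) (at x)"
    and dG: "\<forall>x\<in>-{0}. (G has_derivative (\<lambda>v. Hs x *v v)) (at x)"
    and x: "norm x = 1" and vx: "v \<bullet> x = 0"
  shows "cov_quad h x v = v \<bullet> (Hs x *v v) - (v \<bullet> v) * h x"
proof -
  obtain d where d: "\<forall>s. ((\<lambda>t. h (sph_exp x (t *\<^sub>R v))) has_real_derivative d s) (at s)"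
     "(d has_real_derivative (v \<bullet> (Hs x *v v) - (v \<bullet> v) * h x)) (at 0)"
    using geo[OF dH dG x vx] by blast
  have "(\<lambda>s. deriv (\<lambda>t. h (sph_exp x (t *\<^sub>R v))) s) = d"
    using d(1) by (auto simp: fun_eq_iff intro: DERIV_imp_deriv)
  thus ?thesis unfolding cov_quad_def using DERIV_imp_deriv[OF d(2)] by simp
qed




lemma max2:
  fixes \<phi> d :: "real \<Rightarrow> real"
  assumes der: "\<forall>s. (\<phi> has_real_derivative d s) (at s)" and dd: "(d has_real_derivative D) (at 0)"
    and mx: "\<forall>t. \<phi> t \<le> \<phi> 0"
  shows "d 0 = 0 \<and> D \<le> 0"
proof -
  have d0: "d 0 = 0"
    by (rule DERIV_local_max[OF der[rule_format, of 0], of 1]) (use mx in auto)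
  have "\<not> D > 0"
  proof
    assume "D > 0"
    from DERIV_pos_inc_right[OF dd this] obtain \<delta> where \<delta>: "\<delta> > 0" "\<forall>h>0. h < \<delta> \<longrightarrow> d 0 < d (0 + h)"
      by blast
    define t where "t = \<delta> / 2"
    have t: "0 < t" "t < \<delta>" using \<delta> by (auto simp: t_def)
    obtain z where z: "0 < z" "z < t" "\<phi> t - \<phi> 0 = (t - 0) * d z"
      using MVT2[OF t(1), of \<phi> d] der by blast
    have "d z > 0" using \<delta>(2)[rule_format, of z] z t d0 by simp
    hence "\<phi> t > \<phi> 0" using z t by (simp add: algebra_simps)
    thus False using mx by (meson not_le)
  qed
  thus ?thesis using d0 by simp
qed

lemma det_nat_cong: "(\<forall>i<m. \<forall>j<m. A i j = B i j) \<Longrightarrow> det_nat m A = det_nat m B"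
  unfolding det_nat_def
  apply (intro sum.cong refl arg_cong[where f="\<lambda>x. _ * x"] prod.cong)
  apply (metis lessThan_iff mem_Collect_eq permutes_in_image)
  done

lemma cov_hess_eq:
  fixes h :: "real^'n \<Rightarrow> real" and x u w :: "real^'n"
  assumes dH: "\<forall>x\<in>-{0}. (hom_ext h has_derivative (\<lambda>v. G x \<bullet> v)) (at x)"
    and dG: "\<forall>x\<in>-{0}. (G has_derivative (\<lambda>v. Hs x *v v)) (at x)"
    and x: "norm x = 1" and ux: "u \<bullet> x = 0" and wx: "w \<bullet> x = 0"
  shows "cov_hess h x u w = (u \<bullet> (Hs x *v w) + w \<bullet> (Hs x *v u)) / 2 - (u \<bullet> w) * h x"
proof -
  have a: "(u + w) \<bullet> x = 0" "(u - w) \<bullet> x = 0" using ux wx by (auto simp: inner_add_left inner_diff_left)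
  show ?thesis
    unfolding cov_hess_def cov_quad_eq[OF dH dG x a(1)] cov_quad_eq[OF dH dG x a(2)]
    by (simp add: matrix_vector_right_distrib matrix_vector_mult_diff_distrib inner_add_left inner_add_right
        inner_diff_left inner_diff_right inner_commute[of w u] algebra_simps, simp add: field_simps)
qed

definition symH :: "(real^'n^'n) \<Rightarrow> (nat \<Rightarrow> real^'n) \<Rightarrow> nat \<Rightarrow> nat \<Rightarrow> real" where
  "symH M e i j = (e i \<bullet> (M *v e j) + e j \<bullet> (M *v e i)) / 2"

lemma frame_det_eq:
  fixes h :: "real^'n \<Rightarrow> real" and x :: "real^'n"
  assumes dH: "\<forall>x\<in>-{0}. (hom_ext h has_derivative (\<lambda>v. G x \<bullet> v)) (at x)"
    and dG: "\<forall>x\<in>-{0}. (G has_derivative (\<lambda>v. Hs x *v v)) (at x)"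
    and x: "norm x = 1" and e: "ortho_frame x e"
  shows "frame_det h x e = det_nat (CARD('n) - 1) (symH (Hs x) e)"
  unfolding frame_det_def
proof (rule det_nat_cong, intro allI impI)
  fix i j assume i: "i < CARD('n) - 1" and j: "j < CARD('n) - 1"
  have "e i \<bullet> x = 0" "e j \<bullet> x = 0" "e i \<bullet> e j = (if i = j then 1 else 0)"
    using e i j unfolding ortho_frame_def by auto
  thus "cov_hess h x (e i) (e j) + h x * (if i = j then 1 else 0) = symH (Hs x) e i j"
    using cov_hess_eq[OF dH dG x] by (simp add: symH_def)
qed

lemma qf_symH:
  fixes M :: "real^'n^'n"
  shows "qf m (symH M e) c = (\<Sum>i<m. c i *\<^sub>R e i) \<bullet> (M *v (\<Sum>i<m. c i *\<^sub>R e i))"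
proof -
  have lin: "M *v (\<Sum>i<m. c i *\<^sub>R e i) = (\<Sum>j<m. c j *\<^sub>R (M *v e j))"
    by (simp add: linear_sum[OF matrix_vector_mul_linear] matrix_vector_mult_scaleR)
  have r: "(\<Sum>i<m. c i *\<^sub>R e i) \<bullet> (M *v (\<Sum>i<m. c i *\<^sub>R e i)) = (\<Sum>i<m. \<Sum>j<m. c i * (e i \<bullet> (M *v e j)) * c j)"
    unfolding lin inner_sum_left inner_sum_right by (subst sum.swap) (simp add: mult_ac)
  have sw: "(\<Sum>i<m. \<Sum>j<m. c i * (e j \<bullet> (M *v e i)) * c j) = (\<Sum>i<m. \<Sum>j<m. c i * (e i \<bullet> (M *v e j)) * c j)"
  proof -
    have "(\<Sum>i<m. \<Sum>j<m. c i * (e j \<bullet> (M *v e i)) * c j) = (\<Sum>j<m. \<Sum>i<m. c i * (e j \<bullet> (M *v e i)) * c j)"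
      by (rule sum.swap)
    also have "\<dots> = (\<Sum>i<m. \<Sum>j<m. c i * (e i \<bullet> (M *v e j)) * c j)" by (simp add: mult_ac)
    finally show ?thesis .
  qed
  have "qf m (symH M e) c = ((\<Sum>i<m. \<Sum>j<m. c i * (e i \<bullet> (M *v e j)) * c j) + (\<Sum>i<m. \<Sum>j<m. c i * (e j \<bullet> (M *v e i)) * c j)) / 2"
    unfolding qf_def symH_def by (simp add: sum.distrib[symmetric] sum_divide_distrib algebra_simps add_divide_distrib)
  thus ?thesis unfolding sw r by simp
qed

lemma frame_coord:
  fixes x :: "real^'n"
  assumes e: "ortho_frame x e" and k: "k < CARD('n) - 1"
  shows "(\<Sum>i<CARD('n) - 1. c i *\<^sub>R e i) \<bullet> e k = c k" "(\<Sum>i<CARD('n) - 1. c i *\<^sub>R e i) \<bullet> x = 0"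
proof -
  have "(\<Sum>i<CARD('n) - 1. c i *\<^sub>R e i) \<bullet> e k = (\<Sum>i<CARD('n) - 1. if i = k then c k else 0)"
    unfolding inner_sum_left
  proof (intro sum.cong refl)
    fix i assume "i \<in> {..<CARD('n) - 1}"
    hence "e i \<bullet> e k = (if i = k then 1 else 0)" using e k unfolding ortho_frame_def by auto
    thus "(c i *\<^sub>R e i) \<bullet> e k = (if i = k then c k else 0)" by auto
  qed
  thus "(\<Sum>i<CARD('n) - 1. c i *\<^sub>R e i) \<bullet> e k = c k" using k by simp
  show "(\<Sum>i<CARD('n) - 1. c i *\<^sub>R e i) \<bullet> x = 0"
    unfolding inner_sum_left using e unfolding ortho_frame_def by simp
qed




definition Pt :: "real^'n \<Rightarrow> real^'n \<Rightarrow> real^'n" where "Pt x v = v - (v \<bullet> x) *\<^sub>R x"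

definition Nf :: "(real^'n \<Rightarrow> real^'n^'n) \<Rightarrow> real^'n \<Rightarrow> real^'n \<Rightarrow> real" where
  "Nf Hs x v = Pt x v \<bullet> (Hs x *v Pt x v) + (v \<bullet> x)^2"

lemma cont_qform:
  fixes A :: "'a::topological_space \<Rightarrow> real^'n^'n" and u :: "'a \<Rightarrow> real^'n"
  assumes "continuous_on X A" "continuous_on X u"
  shows "continuous_on X (\<lambda>z. u z \<bullet> (A z *v u z))"
  unfolding inner_vec_def matrix_vector_mult_def
  by (simp add: inner_real_def) (intro continuous_intros assms)

lemma Pt_tangent: "norm x = 1 \<Longrightarrow> Pt x v \<bullet> x = 0"
  by (simp add: Pt_def inner_diff_left dot_square_norm)

lemma Pt_id: "v \<bullet> x = 0 \<Longrightarrow> Pt x v = v"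
  by (simp add: Pt_def)

lemma Pt_decomp: "v = Pt x v + (v \<bullet> x) *\<^sub>R x"
  by (simp add: Pt_def)

lemma Nf_scale: "Nf Hs x (c *\<^sub>R v) = c^2 * Nf Hs x v"
proof -
  have "Pt x (c *\<^sub>R v) = c *\<^sub>R Pt x v" by (simp add: Pt_def algebra_simps)
  thus ?thesis unfolding Nf_def by (simp add: matrix_vector_mult_scaleR power2_eq_square algebra_simps)
qed

lemma Nf_tangent: "v \<bullet> x = 0 \<Longrightarrow> Nf Hs x v = v \<bullet> (Hs x *v v)"
  by (simp add: Nf_def Pt_id)

lemma tangent_iff:
  fixes x :: "real^'n"
  assumes x: "norm x = 1"
  shows "(\<forall>v\<in>sphere 0 1. Nf Hs x v > 0) \<longleftrightarrow> (\<forall>u. u \<bullet> x = 0 \<and> u \<noteq> 0 \<longrightarrow> u \<bullet> (Hs x *v u) > 0)"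
proof
  assume L: "\<forall>v\<in>sphere 0 1. Nf Hs x v > 0"
  show "\<forall>u. u \<bullet> x = 0 \<and> u \<noteq> 0 \<longrightarrow> u \<bullet> (Hs x *v u) > 0"
  proof (intro allI impI)
    fix u :: "real^'n" assume u: "u \<bullet> x = 0 \<and> u \<noteq> 0"
    define v where "v = (1 / norm u) *\<^sub>R u"
    have "v \<in> sphere 0 1" using u by (simp add: v_def)
    hence "0 < Nf Hs x v" using L by auto
    also have "Nf Hs x v = (1 / norm u)^2 * Nf Hs x u" unfolding v_def by (rule Nf_scale)
    finally have "0 < Nf Hs x u" using u by (simp add: zero_less_mult_iff)
    thus "u \<bullet> (Hs x *v u) > 0" using u by (simp add: Nf_tangent)
  qed
next
  assume R: "\<forall>u. u \<bullet> x = 0 \<and> u \<noteq> 0 \<longrightarrow> u \<bullet> (Hs x *v u) > 0"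
  show "\<forall>v\<in>sphere 0 1. Nf Hs x v > 0"
  proof
    fix v :: "real^'n" assume v: "v \<in> sphere 0 1"
    show "Nf Hs x v > 0"
    proof (cases "Pt x v = 0")
      case True
      hence "v = (v \<bullet> x) *\<^sub>R x" using Pt_decomp[of v x] by simp
      hence "v \<bullet> x \<noteq> 0" using v by (metis norm_zero scaleR_zero_left mem_sphere_0 zero_neq_one)
      thus ?thesis using True by (simp add: Nf_def)
    next
      case False
      hence "Pt x v \<bullet> (Hs x *v Pt x v) > 0" using R Pt_tangent[OF x] by auto
      thus ?thesis by (simp add: Nf_def add_pos_nonneg)
    qed
  qed
qed

lemma lin_coeff_zero:
  fixes b c :: real
  assumes "\<forall>s. 0 \<le> s * b + s^2 * c"
  shows "b = 0"
proof (rule ccontr)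
  assume b: "b \<noteq> 0"
  define K where "K = \<bar>c\<bar> + 1"
  have K: "K > 0" "c \<le> K" by (auto simp: K_def)
  define s where "s = - b / (2 * K)"
  have "s^2 * c \<le> s^2 * K" using K by (intro mult_left_mono) auto
  also have "s^2 * K = b^2 / (4 * K)" using K by (simp add: s_def power2_eq_square field_simps)
  finally have "s * b + s^2 * c \<le> (- (b^2)) / (2 * K) + b^2 / (4 * K)"
    using K by (simp add: s_def power2_eq_square field_simps)
  also have "\<dots> = (- (b^2)) / (4 * K)" using K by (simp add: field_simps)
  also have "\<dots> < 0" using K b by (simp add: field_simps)
  finally show False using assms by (meson not_le)
qed

lemma psd_null:
  fixes x w z :: "real^'n" and M :: "real^'n^'n"
  assumes psd: "\<forall>u. u \<bullet> x = 0 \<longrightarrow> 0 \<le> u \<bullet> (M *v u)"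
    and wx: "w \<bullet> x = 0" and w0: "w \<bullet> (M *v w) = 0" and zx: "z \<bullet> x = 0"
  shows "z \<bullet> (M *v w) + w \<bullet> (M *v z) = 0"
proof -
  have "0 \<le> s * (z \<bullet> (M *v w) + w \<bullet> (M *v z)) + s^2 * (z \<bullet> (M *v z))" for s
  proof -
    have "(w + s *\<^sub>R z) \<bullet> x = 0" using wx zx by (simp add: inner_add_left)
    hence "0 \<le> (w + s *\<^sub>R z) \<bullet> (M *v (w + s *\<^sub>R z))" using psd by blast
    also have "\<dots> = s * (z \<bullet> (M *v w) + w \<bullet> (M *v z)) + s^2 * (z \<bullet> (M *v z))"
      using w0 by (simp add: matrix_vector_right_distrib matrix_vector_mult_scaleR inner_add_left
          inner_add_right power2_eq_square algebra_simps)
    finally show ?thesis .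
  qed
  thus ?thesis by (intro lin_coeff_zero) auto
qed

lemma pd_all:
  fixes h :: "real^'n \<Rightarrow> real"
  assumes dH: "\<forall>x\<in>-{0}. (hom_ext h has_derivative (\<lambda>v. G x \<bullet> v)) (at x)"
    and dG: "\<forall>x\<in>-{0}. (G has_derivative (\<lambda>v. Hs x *v v)) (at x)"
    and cH: "continuous_on (-{0}) Hs" and hpos: "\<forall>x\<in>sphere 0 1. h x > 0"
    and detnz: "\<forall>x\<in>sphere 0 1. \<forall>e. ortho_frame x e \<longrightarrow> det_nat (CARD('n) - 1) (symH (Hs x) e) \<noteq> 0"
  shows "\<forall>x\<in>sphere 0 1. \<forall>u. u \<bullet> x = 0 \<and> u \<noteq> 0 \<longrightarrow> u \<bullet> (Hs x *v u) > 0"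
proof (intro ballI allI impI)
  fix x0 u0 assume x0: "x0 \<in> sphere (0::real^'n) 1" and u0: "u0 \<bullet> x0 = 0 \<and> u0 \<noteq> 0"
  let ?S = "sphere (0::real^'n) 1"
  have "CARD('n) \<ge> 2"
  proof -
    have "norm ((1 / norm u0) *\<^sub>R u0) = 1" "((1 / norm u0) *\<^sub>R u0) \<bullet> x0 = 0" using u0 by auto
    from frame_exists_with[OF _ this] x0 show ?thesis by auto
  qed
  hence conn: "connected ?S" by (intro connected_sphere) simp
  define U where "U = {x \<in> ?S. \<forall>v\<in>?S. Nf Hs x v > 0}"
  have cHS: "continuous_on ?S Hs" by (rule continuous_on_subset[OF cH]) auto
  have contN: "continuous_on (?S \<times> UNIV) (\<lambda>z. Nf Hs (fst z) (snd z))"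
  proof -
    have c1: "continuous_on (?S \<times> UNIV) (\<lambda>z. Hs (fst z))"
      by (rule continuous_on_compose2[OF cHS]) (auto intro!: continuous_intros)
    have c2: "continuous_on (?S \<times> UNIV) (\<lambda>z::(real^'n) \<times> (real^'n). Pt (fst z) (snd z))"
      unfolding Pt_def by (intro continuous_intros)
    show ?thesis unfolding Nf_def
      by (intro continuous_intros cont_qform c1 c2)
  qed
  have contNx: "continuous_on ?S (\<lambda>x. Nf Hs x v)" for v
  proof -
    have "continuous_on ?S ((\<lambda>z. Nf Hs (fst z) (snd z)) \<circ> (\<lambda>x. (x, v)))"
      by (rule continuous_on_compose) (auto intro!: continuous_intros continuous_on_subset[OF contN])
    thus ?thesis by (simp add: o_def)
  qed
  have op: "openin (top_of_set ?S) U"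
  proof -
    define C where "C = {z \<in> ?S \<times> ?S. Nf Hs (fst z) (snd z) \<le> 0}"
    have "closed C" unfolding C_def
      by (rule continuous_on_closed_Collect_le)
         (auto intro!: continuous_intros continuous_on_subset[OF contN] closed_Times)
    have "compact ((?S \<times> ?S) \<inter> C)"
      by (rule compact_Int_closed[OF compact_Times[OF compact_sphere compact_sphere] \<open>closed C\<close>])
    moreover have "(?S \<times> ?S) \<inter> C = C" by (auto simp: C_def)
    ultimately have "compact C" by simp
    hence "compact (fst ` C)" by (intro compact_continuous_image continuous_intros)
    hence cl: "closed (fst ` C)" by (rule compact_imp_closed)
    have "U = ?S \<inter> (- fst ` C)"
      unfolding U_def C_def by (auto simp: not_less image_iff) (force)
    thus ?thesis using cl by (auto simp: openin_open intro!: exI[of _ "- fst ` C"])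
  qed
  have UV: "U = ?S \<inter> (\<Inter>v\<in>?S. {x \<in> ?S. 0 \<le> Nf Hs x v})"
  proof
    show "U \<subseteq> ?S \<inter> (\<Inter>v\<in>?S. {x \<in> ?S. 0 \<le> Nf Hs x v})" unfolding U_def by (auto intro: less_imp_le)
  next
    show "?S \<inter> (\<Inter>v\<in>?S. {x \<in> ?S. 0 \<le> Nf Hs x v}) \<subseteq> U"
    proof
      fix x assume "x \<in> ?S \<inter> (\<Inter>v\<in>?S. {x \<in> ?S. 0 \<le> Nf Hs x v})"
      hence x: "x \<in> ?S" and nn: "\<forall>v\<in>?S. 0 \<le> Nf Hs x v" by auto
      have xn: "norm x = 1" using x by simp
      have psd: "\<forall>u. u \<bullet> x = 0 \<longrightarrow> 0 \<le> u \<bullet> (Hs x *v u)"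
      proof (intro allI impI)
        fix u :: "real^'n" assume ux: "u \<bullet> x = 0"
        show "0 \<le> u \<bullet> (Hs x *v u)"
        proof (cases "u = 0")
          case False
          have "0 \<le> Nf Hs x ((1 / norm u) *\<^sub>R u)" using nn False by auto
          also have "\<dots> = (1 / norm u)^2 * (u \<bullet> (Hs x *v u))" using ux by (simp add: Nf_scale Nf_tangent)
          finally show ?thesis using False by (simp add: zero_le_mult_iff)
        qed simp
      qed
      show "x \<in> U"
      proof (rule ccontr)
        assume "x \<notin> U"
        then obtain v where v: "v \<in> ?S" "Nf Hs x v \<le> 0" using x unfolding U_def by auto
        hence N0: "Nf Hs x v = 0" using nn by (meson order_antisym)
        define u where "u = Pt x v"
        have ux: "u \<bullet> x = 0" by (simp add: u_def Pt_tangent[OF xn])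
        have "u \<bullet> (Hs x *v u) + (v \<bullet> x)^2 = 0" using N0 by (simp add: Nf_def u_def)
        moreover have "0 \<le> u \<bullet> (Hs x *v u)" using psd ux by blast
        ultimately have uq: "u \<bullet> (Hs x *v u) = 0" and t0: "v \<bullet> x = 0"
          by (smt (verit) zero_le_power2, smt (verit) zero_le_power2 power2_less_eq_zero_iff)
        have "u = v" using t0 by (simp add: u_def Pt_id)
        hence u0: "u \<noteq> 0" using v by auto
        define w where "w = (1 / norm u) *\<^sub>R u"
        have wn: "norm w = 1" and wx: "w \<bullet> x = 0" using u0 ux by (auto simp: w_def)
        have wq: "w \<bullet> (Hs x *v w) = 0" using uq by (simp add: w_def matrix_vector_mult_scaleR)
        obtain e where e: "ortho_frame x e" "e 0 = w" "0 < CARD('n) - 1"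
          using frame_exists_with[OF xn wn wx] by blast
        have "det_nat (CARD('n) - 1) (symH (Hs x) e) = 0"
        proof (rule det_nat_zero_col[OF e(3)], intro allI impI)
          fix i assume "i < CARD('n) - 1"
          hence "e i \<bullet> x = 0" using e(1) unfolding ortho_frame_def by auto
          thus "symH (Hs x) e i 0 = 0" using psd_null[OF psd wx wq] by (simp add: symH_def e(2))
        qed
        thus False using detnz x e(1) by blast
      qed
    qed
  qed
  have cl: "closedin (top_of_set ?S) U"
  proof -
    have "closed (\<Inter>v\<in>?S. {x \<in> ?S. 0 \<le> Nf Hs x v})"
      by (intro closed_INT ballI continuous_on_closed_Collect_le contNx continuous_intros) auto
    thus ?thesis unfolding closedin_closed UV by blast
  qed
  have contH: "continuous_on ?S h"
  proof -
    have "continuous_on ?S (hom_ext h)"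
      by (intro continuous_at_imp_continuous_on ballI has_derivative_continuous) (use dH in auto)
    thus ?thesis by (rule continuous_on_cong[THEN iffD1, rotated 2]) (auto simp: hom_ext_sphere)
  qed
  obtain xm where xm: "xm \<in> ?S" "\<forall>y\<in>?S. h xm \<le> h y"
    using continuous_attains_inf[OF compact_sphere _ contH] x0 by blast
  have "xm \<in> U"
  proof -
    have xmn: "norm xm = 1" using xm by simp
    have "\<forall>u. u \<bullet> xm = 0 \<and> u \<noteq> 0 \<longrightarrow> u \<bullet> (Hs xm *v u) > 0"
    proof (intro allI impI)
      fix u :: "real^'n" assume u: "u \<bullet> xm = 0 \<and> u \<noteq> 0"
      obtain d where ns: "\<forall>t. norm (sph_exp xm (t *\<^sub>R u)) = 1"
        and d: "\<forall>s. ((\<lambda>t. h (sph_exp xm (t *\<^sub>R u))) has_real_derivative d s) (at s)"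
          "(d has_real_derivative (u \<bullet> (Hs xm *v u) - (u \<bullet> u) * h xm)) (at 0)"
        using geo[OF dH dG xmn, of u] u by blast
      have "(\<lambda>s. - d s) 0 = 0 \<and> - (u \<bullet> (Hs xm *v u) - (u \<bullet> u) * h xm) \<le> 0"
      proof (rule max2)
        show "\<forall>s. ((\<lambda>t. - h (sph_exp xm (t *\<^sub>R u))) has_real_derivative - d s) (at s)"
          using d(1) by (auto intro: DERIV_minus)
        show "((\<lambda>s. - d s) has_real_derivative - (u \<bullet> (Hs xm *v u) - (u \<bullet> u) * h xm)) (at 0)"
          using d(2) by (rule DERIV_minus)
        show "\<forall>t. - h (sph_exp xm (t *\<^sub>R u)) \<le> - h (sph_exp xm (0 *\<^sub>R u))"
          using xm ns by (simp add: sph_exp_def)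
      qed
      moreover have "(u \<bullet> u) * h xm > 0" using u hpos xm by auto
      ultimately show "u \<bullet> (Hs xm *v u) > 0" by linarith
    qed
    thus ?thesis using tangent_iff[OF xmn] xm by (simp add: U_def)
  qed
  hence "U = ?S" using conn op cl unfolding connected_clopen by blast
  hence "\<forall>v\<in>?S. Nf Hs x0 v > 0" using x0 unfolding U_def by blast
  thus "u0 \<bullet> (Hs x0 *v u0) > 0" using tangent_iff[of x0 Hs] x0 u0 by auto
qed




lemma g_unnorm_nonneg: "0 \<le> g_unnorm \<alpha> q y"
  by (simp add: g_unnorm_def)

lemma g_strict:
  fixes y1 y2 :: "real^'n"
  assumes a: "\<alpha> > 0" and q: "q < \<alpha> / (real CARD('n) + \<alpha>)"
    and r: "0 < norm y1" and rs: "norm y1 < norm y2" and pos: "g_unnorm \<alpha> q y2 > 0"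
  shows "g_unnorm \<alpha> q y2 < g_unnorm \<alpha> q y1"
proof -
  let ?n = "real CARD('n)"
  have pw: "norm y1 powr \<alpha> < norm y2 powr \<alpha>" using a r rs by (intro powr_less_mono2) auto
  have r0: "0 \<le> norm y1 powr \<alpha>" by simp
  consider "q = 0" | "q > 0" | "q < 0" by linarith
  thus ?thesis
  proof cases
    case 1
    have "- (norm y2 powr \<alpha>) / \<alpha> < - (norm y1 powr \<alpha>) / \<alpha>" using pw a by (simp add: divide_strict_right_mono)
    thus ?thesis using 1 by (simp add: g_unnorm_def)
  next
    case 2
    define e where "e = 1 / q - ?n / \<alpha> - 1"
    have "q * (?n + \<alpha>) < \<alpha>" using q a by (simp add: pos_less_divide_eq add_pos_nonneg)
    hence "?n / \<alpha> + 1 < 1 / q" using 2 a by (simp add: field_simps)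
    hence e: "e > 0" by (simp add: e_def)
    define b1 where "b1 = 1 - q / \<alpha> * norm y1 powr \<alpha>"
    define b2 where "b2 = 1 - q / \<alpha> * norm y2 powr \<alpha>"
    have qa: "q / \<alpha> > 0" using 2 a by simp
    have b12: "b2 < b1" unfolding b1_def b2_def using mult_strict_left_mono[OF pw qa] by linarith
    have gy1: "g_unnorm \<alpha> q y1 = max 0 b1 powr e" unfolding g_unnorm_def b1_def e_def
      by (rule if_not_P) (use 2 in simp)
    have gy2: "g_unnorm \<alpha> q y2 = max 0 b2 powr e" unfolding g_unnorm_def b2_def e_def
      by (rule if_not_P) (use 2 in simp)
    have "max 0 b2 powr e > 0" using pos gy2 by simp
    hence b2: "b2 > 0" by (cases "b2 > 0") auto
    have "b2 powr e < b1 powr e" using b12 b2 e by (intro powr_less_mono2) auto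
    thus ?thesis using b2 b12 gy1 gy2 by simp
  next
    case 3
    define e where "e = 1 / q - ?n / \<alpha> - 1"
    have "1 / q < 0" using 3 by simp
    moreover have "?n / \<alpha> \<ge> 0" using a by simp
    ultimately have e: "e < 0" unfolding e_def by linarith
    define b1 where "b1 = 1 - q / \<alpha> * norm y1 powr \<alpha>"
    define b2 where "b2 = 1 - q / \<alpha> * norm y2 powr \<alpha>"
    have qa: "q / \<alpha> < 0" using 3 a by (simp add: divide_neg_pos)
    have b12: "b1 < b2" unfolding b1_def b2_def using mult_strict_left_mono_neg[OF pw qa] by linarith
    have "q / \<alpha> * norm y1 powr \<alpha> \<le> 0" using mult_nonpos_nonneg[OF less_imp_le[OF qa] r0] .
    hence b1: "b1 \<ge> 1" by (simp add: b1_def)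
    have gy1: "g_unnorm \<alpha> q y1 = max 0 b1 powr e" unfolding g_unnorm_def b1_def e_def
      by (rule if_not_P) (use 3 in simp)
    have gy2: "g_unnorm \<alpha> q y2 = max 0 b2 powr e" unfolding g_unnorm_def b2_def e_def
      by (rule if_not_P) (use 3 in simp)
    have "b2 powr e < b1 powr e" using b12 b1 e by (intro powr_less_mono2_neg) auto
    thus ?thesis using b1 b12 gy1 gy2 by simp
  qed
qed

lemma grad_eq:
  fixes H :: "real^'n \<Rightarrow> real"
  assumes dH: "\<forall>x\<in>-{0}. (H has_derivative (\<lambda>v. G x \<bullet> v)) (at x)" and y: "y \<noteq> 0"
  shows "grad H y = G y"
  unfolding grad_def
proof (rule the_equality)
  show "(H has_derivative (\<bullet>) (G y)) (at y)" using dH y by simp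
next
  fix g assume "(H has_derivative (\<bullet>) g) (at y)"
  hence "(\<bullet>) g = (\<bullet>) (G y)" using has_derivative_unique dH y by blast
  hence "g \<bullet> (g - G y) = G y \<bullet> (g - G y)" by metis
  hence "(g - G y) \<bullet> (g - G y) = 0" by (simp add: inner_diff_left)
  thus "g = G y" by simp
qed

lemma symH_sym: "symH M e i j = symH M e j i"
  by (simp add: symH_def add.commute)

lemma qf_scale: "qf m (\<lambda>i j. c * A i j) v = c * qf m A v"
  unfolding qf_def sum_distrib_left by (simp add: mult_ac)

lemma le_side:
  fixes h1 h2 f :: "real^'n \<Rightarrow> real" and p \<alpha> q :: real
  assumes p: "p \<ge> real CARD('n)" and a: "\<alpha> > 0" and q: "q < \<alpha> / (real CARD('n) + \<alpha>)"
    and fpos: "\<forall>x\<in>sphere 0 1. f x > 0"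
    and s1: "pos_C2_solution p \<alpha> q f h1" and s2: "pos_C2_solution p \<alpha> q f h2"
  shows "\<forall>x\<in>sphere 0 1. h1 x \<le> h2 x"
proof -
  let ?S = "sphere (0::real^'n) 1"
  let ?m = "CARD('n) - 1"
  let ?Z = "\<integral>z. g_unnorm \<alpha> q (z :: real^'n) \<partial>lborel"
  obtain G1 Hs1 where dH1: "\<forall>x\<in>-{0}. (hom_ext h1 has_derivative (\<lambda>v. G1 x \<bullet> v)) (at x)"
    and dG1: "\<forall>x\<in>-{0}. (G1 has_derivative (\<lambda>v. Hs1 x *v v)) (at x)" and cH1: "continuous_on (-{0}) Hs1"
    using s1 unfolding pos_C2_solution_def C2_on_def by blast
  obtain G2 Hs2 where dH2: "\<forall>x\<in>-{0}. (hom_ext h2 has_derivative (\<lambda>v. G2 x \<bullet> v)) (at x)"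
    and dG2: "\<forall>x\<in>-{0}. (G2 has_derivative (\<lambda>v. Hs2 x *v v)) (at x)" and cH2: "continuous_on (-{0}) Hs2"
    using s2 unfolding pos_C2_solution_def C2_on_def by blast
  have hp1: "\<forall>x\<in>?S. h1 x > 0" and hp2: "\<forall>x\<in>?S. h2 x > 0"
    using s1 s2 unfolding pos_C2_solution_def by auto
  have eq1: "\<forall>x\<in>?S. \<forall>e. ortho_frame x e \<longrightarrow>
      h1 x powr (1 - p) * g_aq \<alpha> q (G1 x) * det_nat ?m (symH (Hs1 x) e) = f x"
  proof (intro ballI allI impI)
    fix x e assume x: "x \<in> ?S" and e: "ortho_frame x e"
    hence "x \<noteq> 0" by auto
    thus "h1 x powr (1 - p) * g_aq \<alpha> q (G1 x) * det_nat ?m (symH (Hs1 x) e) = f x"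
    proof -
      have fd: "frame_det h1 x e = det_nat ?m (symH (Hs1 x) e)" using frame_det_eq[OF dH1 dG1, of x e] x e by simp
      have gr: "grad (hom_ext h1) x = G1 x" using grad_eq[OF dH1] \<open>x \<noteq> 0\<close> by simp
      have "h1 x powr (1 - p) * g_aq \<alpha> q (grad (hom_ext h1) x) * frame_det h1 x e = f x"
        using s1 x e unfolding pos_C2_solution_def by blast
      thus ?thesis by (simp only: fd gr)
    qed
  qed
  have eq2: "\<forall>x\<in>?S. \<forall>e. ortho_frame x e \<longrightarrow>
      h2 x powr (1 - p) * g_aq \<alpha> q (G2 x) * det_nat ?m (symH (Hs2 x) e) = f x"
  proof (intro ballI allI impI)
    fix x e assume x: "x \<in> ?S" and e: "ortho_frame x e"
    hence "x \<noteq> 0" by auto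
    thus "h2 x powr (1 - p) * g_aq \<alpha> q (G2 x) * det_nat ?m (symH (Hs2 x) e) = f x"
    proof -
      have fd: "frame_det h2 x e = det_nat ?m (symH (Hs2 x) e)" using frame_det_eq[OF dH2 dG2, of x e] x e by simp
      have gr: "grad (hom_ext h2) x = G2 x" using grad_eq[OF dH2] \<open>x \<noteq> 0\<close> by simp
      have "h2 x powr (1 - p) * g_aq \<alpha> q (grad (hom_ext h2) x) * frame_det h2 x e = f x"
        using s2 x e unfolding pos_C2_solution_def by blast
      thus ?thesis by (simp only: fd gr)
    qed
  qed
  have detnz1: "\<forall>x\<in>?S. \<forall>e. ortho_frame x e \<longrightarrow> det_nat ?m (symH (Hs1 x) e) \<noteq> 0"
  proof (intro ballI allI impI notI)
    fix x e assume x: "x \<in> ?S" and e: "ortho_frame x e" and d0: "det_nat ?m (symH (Hs1 x) e) = 0"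
    have "h1 x powr (1 - p) * g_aq \<alpha> q (G1 x) * det_nat ?m (symH (Hs1 x) e) = f x" using eq1 x e by blast
    hence "f x = 0" using d0 by simp
    moreover have "f x > 0" using fpos x by blast
    ultimately show False by simp
  qed
  have pd1: "\<forall>x\<in>?S. \<forall>u. u \<bullet> x = 0 \<and> u \<noteq> 0 \<longrightarrow> u \<bullet> (Hs1 x *v u) > 0"
    by (rule pd_all[OF dH1 dG1 cH1 hp1 detnz1])
  have contH: "continuous_on ?S h" if dH: "\<forall>x\<in>-{0}. (hom_ext h has_derivative (\<lambda>v. G x \<bullet> v)) (at x)"
    for h :: "real^'n \<Rightarrow> real" and G
  proof -
    have "continuous_on ?S (hom_ext h)"
      by (intro continuous_at_imp_continuous_on ballI has_derivative_continuous) (use dH in auto)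
    thus ?thesis by (rule continuous_on_cong[THEN iffD1, rotated 2]) (auto simp: hom_ext_sphere)
  qed
  have "continuous_on ?S (\<lambda>x. h1 x / h2 x)"
    using contH[OF dH1] contH[OF dH2] hp2 by (intro continuous_intros) auto
  moreover have "?S \<noteq> {}" by simp
  ultimately obtain x0 where x0: "x0 \<in> ?S" "\<forall>y\<in>?S. h1 y / h2 y \<le> h1 x0 / h2 x0"
    using continuous_attains_sup[OF compact_sphere] by blast
  define l where "l = h1 x0 / h2 x0"
  have x0n: "norm x0 = 1" using x0 by simp
  have h2x0: "h2 x0 > 0" using hp2 x0(1) by blast
  have h1x0: "h1 x0 > 0" using hp1 x0(1) by blast
  have h1l: "h1 x0 = l * h2 x0" using h2x0 by (simp add: l_def)
  have l0: "l > 0" using h1x0 h2x0 by (simp add: l_def)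
  have le: "h1 y \<le> l * h2 y" if "y \<in> ?S" for y
  proof -
    have "h2 y > 0" using hp2 that by blast
    moreover have "h1 y / h2 y \<le> l" using x0(2) that unfolding l_def by blast
    ultimately show ?thesis by (simp add: pos_divide_le_eq mult.commute)
  qed
  have "\<not> l > 1"
  proof
    assume l1: "l > 1"
    \<comment> \<open>first and second order conditions\<close>
    have cond: "G1 x0 \<bullet> v = l * (G2 x0 \<bullet> v) \<and> v \<bullet> (Hs1 x0 *v v) \<le> l * (v \<bullet> (Hs2 x0 *v v))"
      if vx: "v \<bullet> x0 = 0" for v
    proof -
      obtain d1 where ns: "\<forall>t. norm (sph_exp x0 (t *\<^sub>R v)) = 1"
        and d1: "\<forall>s. ((\<lambda>t. h1 (sph_exp x0 (t *\<^sub>R v))) has_real_derivative d1 s) (at s)" "d1 0 = G1 x0 \<bullet> v"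
          "(d1 has_real_derivative (v \<bullet> (Hs1 x0 *v v) - (v \<bullet> v) * h1 x0)) (at 0)"
        using geo[OF dH1 dG1 x0n vx] by blast
      obtain d2 where d2: "\<forall>s. ((\<lambda>t. h2 (sph_exp x0 (t *\<^sub>R v))) has_real_derivative d2 s) (at s)" "d2 0 = G2 x0 \<bullet> v"
          "(d2 has_real_derivative (v \<bullet> (Hs2 x0 *v v) - (v \<bullet> v) * h2 x0)) (at 0)"
        using geo[OF dH2 dG2 x0n vx] by blast
      have "(\<lambda>s. d1 s - l * d2 s) 0 = 0 \<and> (v \<bullet> (Hs1 x0 *v v) - (v \<bullet> v) * h1 x0) - l * (v \<bullet> (Hs2 x0 *v v) - (v \<bullet> v) * h2 x0) \<le> 0"
      proof (rule max2)
        show "\<forall>s. ((\<lambda>t. h1 (sph_exp x0 (t *\<^sub>R v)) - l * h2 (sph_exp x0 (t *\<^sub>R v))) has_real_derivative d1 s - l * d2 s) (at s)"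
          using d1(1) d2(1) by (auto intro!: derivative_eq_intros)
        show "((\<lambda>s. d1 s - l * d2 s) has_real_derivative (v \<bullet> (Hs1 x0 *v v) - (v \<bullet> v) * h1 x0) - l * (v \<bullet> (Hs2 x0 *v v) - (v \<bullet> v) * h2 x0)) (at 0)"
          using d1(3) d2(3) by (auto intro!: derivative_eq_intros)
        have "sph_exp x0 (0 *\<^sub>R v) = x0" by (simp add: sph_exp_def)
        moreover have "h1 (sph_exp x0 (t *\<^sub>R v)) - l * h2 (sph_exp x0 (t *\<^sub>R v)) \<le> 0" for t
          using le[of "sph_exp x0 (t *\<^sub>R v)"] ns by simp
        ultimately show "\<forall>t. h1 (sph_exp x0 (t *\<^sub>R v)) - l * h2 (sph_exp x0 (t *\<^sub>R v)) \<le>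
             h1 (sph_exp x0 (0 *\<^sub>R v)) - l * h2 (sph_exp x0 (0 *\<^sub>R v))"
          using h1l by simp
      qed
      thus ?thesis using d1(2) d2(2) h1l by (simp add: algebra_simps)
    qed
    have x00: "x0 \<noteq> 0" using x0n by auto
    have e1: "G1 x0 \<bullet> x0 = h1 x0" using euler[OF dH1 x00] x0n by (simp add: hom_ext_sphere)
    have e2: "G2 x0 \<bullet> x0 = h2 x0" using euler[OF dH2 x00] x0n by (simp add: hom_ext_sphere)
    have Geq: "G1 x0 = l *\<^sub>R G2 x0"
    proof -
      define w where "w = G1 x0 - l *\<^sub>R G2 x0"
      have wx: "w \<bullet> x0 = 0" using e1 e2 h1l by (simp add: w_def inner_diff_left)
      have "w \<bullet> w = G1 x0 \<bullet> w - l * (G2 x0 \<bullet> w)" by (simp add: w_def inner_diff_left)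
      also have "\<dots> = 0" using cond[OF wx] by simp
      finally show ?thesis by (simp add: w_def)
    qed
    have "G2 x0 \<noteq> 0"
    proof
      assume "G2 x0 = 0"
      hence "h2 x0 = 0" using e2 by simp
      thus False using h2x0 by simp
    qed
    hence G20: "norm (G2 x0) > 0" by simp
    have nG: "norm (G1 x0) = l * norm (G2 x0)" using Geq l0 by simp
    obtain e where e: "ortho_frame x0 e" using frame_exists[OF x0n] by blast
    define R1 where "R1 = symH (Hs1 x0) e"
    define R2 where "R2 = symH (Hs2 x0) e"
    have W: "(\<Sum>i<?m. c i *\<^sub>R e i) \<bullet> x0 = 0" "\<forall>k<?m. (\<Sum>i<?m. c i *\<^sub>R e i) \<bullet> e k = c k" for c
    proof -
      show "(\<Sum>i<?m. c i *\<^sub>R e i) \<bullet> x0 = 0"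
        unfolding inner_sum_left using e unfolding ortho_frame_def by simp
      show "\<forall>k<?m. (\<Sum>i<?m. c i *\<^sub>R e i) \<bullet> e k = c k" using frame_coord(1)[OF e] by blast
    qed
    have dm: "0 < det_nat ?m R1 \<and> det_nat ?m R1 \<le> det_nat ?m (\<lambda>i j. l * R2 i j)"
    proof (rule det_mono)
      show "\<forall>i<?m. \<forall>j<?m. R1 i j = R1 j i" unfolding R1_def using symH_sym by auto
      show "\<forall>i<?m. \<forall>j<?m. l * R2 i j = l * R2 j i" unfolding R2_def using symH_sym by auto
      show "\<forall>c. (\<exists>i<?m. c i \<noteq> 0) \<longrightarrow> 0 < qf ?m R1 c"
      proof (intro allI impI)
        fix c :: "nat \<Rightarrow> real" assume "\<exists>i<?m. c i \<noteq> 0"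
        then obtain k where k: "k < ?m" "c k \<noteq> 0" by blast
        have "(\<Sum>i<?m. c i *\<^sub>R e i) \<noteq> 0"
        proof
          assume "(\<Sum>i<?m. c i *\<^sub>R e i) = 0"
          hence "c k = 0" using W(2)[of c] k by simp
          thus False using k by simp
        qed
        thus "0 < qf ?m R1 c" unfolding R1_def qf_symH using pd1 x0 W(1) by blast
      qed
      show "\<forall>c. qf ?m R1 c \<le> qf ?m (\<lambda>i j. l * R2 i j) c"
        unfolding qf_scale R1_def R2_def qf_symH using cond W(1) by blast
    qed
    have dm2: "det_nat ?m R1 \<le> l ^ ?m * det_nat ?m R2" using dm by (simp add: det_nat_smult)
    have lm: "l ^ ?m > 0" using l0 by simp
    have "0 < l ^ ?m * det_nat ?m R2" using dm dm2 by linarith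
    hence R2pos: "det_nat ?m R2 > 0" using zero_less_mult_pos lm by blast
    have E1: "h1 x0 powr (1 - p) * (g_unnorm \<alpha> q (G1 x0) / ?Z) * det_nat ?m R1 = f x0"
      using eq1 x0(1) e unfolding R1_def g_aq_def by blast
    have E2: "h2 x0 powr (1 - p) * (g_unnorm \<alpha> q (G2 x0) / ?Z) * det_nat ?m R2 = f x0"
      using eq2 x0(1) e unfolding R2_def g_aq_def by blast
    have Z0: "?Z \<ge> 0" by (rule integral_nonneg_AE) (simp add: g_unnorm_nonneg)
    have hpp: "h2 x0 powr (1 - p) > 0" "h1 x0 powr (1 - p) > 0" using h1x0 h2x0 by auto
    have fx0: "f x0 > 0" using fpos x0(1) by blast
    have "0 < h1 x0 powr (1 - p) * (g_unnorm \<alpha> q (G1 x0) / ?Z) * det_nat ?m R1" using E1 fx0 by simp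
    hence "0 < h1 x0 powr (1 - p) * (g_unnorm \<alpha> q (G1 x0) / ?Z)" using dm zero_less_mult_pos2 by blast
    hence "g_unnorm \<alpha> q (G1 x0) / ?Z > 0" using hpp(2) zero_less_mult_pos by blast
    hence Zp: "?Z > 0" and u1: "g_unnorm \<alpha> q (G1 x0) > 0"
      using Z0 g_unnorm_nonneg[of \<alpha> q "G1 x0"] by (auto simp: zero_less_divide_iff)
    have "h1 x0 powr (1 - p) = l powr (1 - p) * h2 x0 powr (1 - p)"
      using h1l l0 hp2 x0 by (simp add: powr_mult)
    hence "(h2 x0 powr (1 - p) / ?Z) * (l powr (1 - p) * g_unnorm \<alpha> q (G1 x0) * det_nat ?m R1)
        = (h2 x0 powr (1 - p) / ?Z) * (g_unnorm \<alpha> q (G2 x0) * det_nat ?m R2)"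
      using E1 E2 by (simp add: mult_ac)
    moreover have "h2 x0 powr (1 - p) / ?Z \<noteq> 0" using hpp Zp by simp
    ultimately have key: "l powr (1 - p) * g_unnorm \<alpha> q (G1 x0) * det_nat ?m R1 = g_unnorm \<alpha> q (G2 x0) * det_nat ?m R2"
      by (rule mult_left_cancel[THEN iffD1, rotated])
    have "l powr (1 - p) * l ^ ?m = l powr (real CARD('n) - p)"
    proof -
      have "l ^ ?m = l powr real ?m" by (rule powr_realpow[OF l0, symmetric])
      moreover have "1 - p + real ?m = real CARD('n) - p" by (simp add: of_nat_diff)
      ultimately show ?thesis by (simp add: powr_add[symmetric])
    qed
    moreover have "l powr (real CARD('n) - p) \<le> l powr 0" using p l1 by (intro powr_mono) auto
    ultimately have lp: "l powr (1 - p) * l ^ ?m \<le> 1" using l0 by simp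
    have "g_unnorm \<alpha> q (G2 x0) * det_nat ?m R2 \<le> l powr (1 - p) * g_unnorm \<alpha> q (G1 x0) * (l ^ ?m * det_nat ?m R2)"
      unfolding key[symmetric] using dm2 u1 l0 by (intro mult_left_mono) auto
    also have "\<dots> = (l powr (1 - p) * l ^ ?m) * g_unnorm \<alpha> q (G1 x0) * det_nat ?m R2" by (simp add: mult_ac)
    also have "\<dots> = (l powr (1 - p) * l ^ ?m) * (g_unnorm \<alpha> q (G1 x0) * det_nat ?m R2)" by (simp add: mult_ac)
    also have "\<dots> \<le> 1 * (g_unnorm \<alpha> q (G1 x0) * det_nat ?m R2)"
      by (rule mult_right_mono[OF lp]) (use u1 R2pos in simp)
    finally have "g_unnorm \<alpha> q (G2 x0) \<le> g_unnorm \<alpha> q (G1 x0)" using R2pos by simp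
    moreover have "g_unnorm \<alpha> q (G1 x0) < g_unnorm \<alpha> q (G2 x0)"
      using g_strict[OF a q G20 _ u1] nG l1 G20 by simp
    ultimately show False by simp
  qed
  hence "l \<le> 1" by simp
  show ?thesis
  proof
    fix y assume y: "y \<in> ?S"
    have "h2 y > 0" using hp2 y by blast
    hence "l * h2 y \<le> 1 * h2 y" by (intro mult_right_mono[OF \<open>l \<le> 1\<close>]) simp
    thus "h1 y \<le> h2 y" using le[OF y] by simp
  qed
qed

theorem theorem5p5:
  fixes h1 h2 f :: "real^'n \<Rightarrow> real" and p \<alpha> q :: real
  assumes "p \<ge> real CARD('n)" and "\<alpha> > 0" and "q < \<alpha> / (real CARD('n) + \<alpha>)"
    and "\<forall>x\<in>sphere 0 1. f x > 0"
    and "pos_C2_solution p \<alpha> q f h1" and "pos_C2_solution p \<alpha> q f h2"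
  shows "\<forall>x\<in>sphere 0 1. h1 x = h2 x"
  using le_side[OF assms(1-4) assms(5) assms(6)] le_side[OF assms(1-4) assms(6) assms(5)]
  by (auto intro: order_antisym)

end
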